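(* Let $\mathcal M$ be a structural causal model with binary $X$ (values $x,x'$), binary $Y$ (values $y,y'$), discrete sets of variables $C$ and $Z$, where $C$ contains no descendant of $X$, and such that for all $x\ne x'$ in the range of $X$, $Y_x$ is independent of $(X,Z_{x'})$ conditionally on $(Z_x,C)$. Fix $c$ with $P(c)>0$. Then $$\max\{0,\ P(y_x\mid c)-P(y_{x'}\mid c),\ P(y\mid c)-P(y_{x'}\mid c),\ P(y_x\mid c)-P(y\mid c)\}\le P(y_x,y'_{x'}\mid c)$$ and $$P(y_x,y'_{x'}\mid c)\le\min\Big\{P(y_x\mid c),\ P(y'_{x'}\mid c),\ P(y,x\mid c)+P(y',x'\mid c),\ P(y_x\mid c)-P(y_{x'}\mid c)+P(y,x'\mid c)+P(y',x\mid c),$$ $$\qquad\sum_z\sum_{z'}\min\{P(y\mid z,x,c),P(y'\mid z',x',c)\}\cdot\min\{P(z_x\mid c),P(z'_{x'}\mid c)\}\Big\},$$ where $z,z'$ range over values of $Z$ (with the conditional probabilities defined).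
   Context: For a value $x$ of $X$, $Y_x$ and $Z_x$ denote the counterfactual variables "the value $Y$ (resp. $Z$) would take had $X$ been set to $x$"; $y_x$ is the event $Y_x=y$, $z_x$ the event $Z_x=z$, $z'_{x'}$ the event $Z_{x'}=z'$. Unsubscripted probabilities are observational. Consistency: $X=x$ implies $Y_x=Y$ and $Z_x=Z$. *)

theory Defs
  imports "HOL-Probability.Probability"
begin

text \<open>Discrete probability space of units: a pmf M over a type 'u. All variables
  (observational and counterfactual) are random variables on it.\<close>

definition Pr :: "'u pmf \<Rightarrow> ('u \<Rightarrow> bool) \<Rightarrow> real" where
  "Pr M A = measure_pmf.prob M {\<omega>. A \<omega>}"

definition cPr :: "'u pmf \<Rightarrow> ('u \<Rightarrow> bool) \<Rightarrow> ('u \<Rightarrow> bool) \<Rightarrow> real" where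
  "cPr M A B = Pr M (\<lambda>\<omega>. A \<omega> \<and> B \<omega>) / Pr M B"

definition cond_indep ::
  "'u pmf \<Rightarrow> ('u \<Rightarrow> 'a) \<Rightarrow> ('u \<Rightarrow> 'b) \<Rightarrow> ('u \<Rightarrow> 'w) \<Rightarrow> bool" where
  "cond_indep M A B W \<longleftrightarrow>
     (\<forall>a b w. Pr M (\<lambda>\<omega>. A \<omega> = a \<and> B \<omega> = b \<and> W \<omega> = w) * Pr M (\<lambda>\<omega>. W \<omega> = w)
            = Pr M (\<lambda>\<omega>. A \<omega> = a \<and> W \<omega> = w) * Pr M (\<lambda>\<omega>. B \<omega> = b \<and> W \<omega> = w))"

end

theory Submission
  imports Defs
begin

lemma Pr_infsum:
  fixes M :: "'u pmf" and f :: "'u \<Rightarrow> 'b"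
  shows "((\<lambda>b. Pr M (\<lambda>\<omega>. P \<omega> \<and> f \<omega> = b)) has_sum Pr M P) UNIV"
proof -
  define N where "N = map_pmf (\<lambda>\<omega>. (P \<omega>, f \<omega>)) M"
  have inj: "inj_on (Pair True) (UNIV::'b set)" by (auto simp: inj_on_def)
  have "Pr M P = measure N (Pair True ` UNIV)"
    unfolding N_def Pr_def by (simp add: vimage_def image_def)
  also have "\<dots> = infsetsum (pmf N) (Pair True ` UNIV)"
    by (rule measure_pmf_conv_infsetsum)
  also have "\<dots> = infsum (pmf N) (Pair True ` UNIV)"
    by (rule infsetsum_infsum) auto
  finally have e: "Pr M P = infsum (pmf N) (Pair True ` UNIV)" .
  have s: "pmf N summable_on (Pair True ` UNIV)"
    by (metis abs_summable_summable abs_summable_equivalent pmf_abs_summable)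
  have "(pmf N has_sum Pr M P) (Pair True ` UNIV)"
    using e s by (simp add: summable_iff_has_sum_infsum)
  hence "((pmf N \<circ> Pair True) has_sum Pr M P) UNIV"
    using has_sum_reindex[OF inj] by blast
  moreover have "(pmf N \<circ> Pair True) = (\<lambda>b. Pr M (\<lambda>\<omega>. P \<omega> \<and> f \<omega> = b))"
    unfolding N_def Pr_def by (auto simp: pmf_map vimage_def intro!: arg_cong[where f="measure_pmf.prob M"])
  ultimately show ?thesis by simp
qed


lemma Pr_cong: "(\<And>\<omega>. P \<omega> \<longleftrightarrow> Q \<omega>) \<Longrightarrow> Pr M P = Pr M Q"
  unfolding Pr_def by (rule arg_cong[where f="measure_pmf.prob M"]) auto

lemma Pr_nonneg: "0 \<le> Pr M P"
  unfolding Pr_def by simp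

lemma Pr_mono: "(\<And>\<omega>. P \<omega> \<Longrightarrow> Q \<omega>) \<Longrightarrow> Pr M P \<le> Pr M Q"
  unfolding Pr_def by (rule measure_pmf.finite_measure_mono) auto

lemma cPr_nonneg: "0 \<le> cPr M P Q"
  unfolding cPr_def by (simp add: Pr_nonneg)

lemma Pr_marg:
  assumes "\<And>b. Pr M (\<lambda>\<omega>. P \<omega> \<and> f \<omega> = b) * D = K * Pr M (\<lambda>\<omega>. Q \<omega> \<and> f \<omega> = b)"
  shows "Pr M P * D = K * Pr M Q"
proof -
  have h1: "((\<lambda>b. Pr M (\<lambda>\<omega>. P \<omega> \<and> f \<omega> = b) * D) has_sum Pr M P * D) UNIV"
    by (rule has_sum_cmult_left) (rule Pr_infsum)
  have h2: "((\<lambda>b. K * Pr M (\<lambda>\<omega>. Q \<omega> \<and> f \<omega> = b)) has_sum K * Pr M Q) UNIV"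
    by (rule has_sum_cmult_right) (rule Pr_infsum)
  show ?thesis using h1 h2 assms has_sum_unique by (metis (no_types, lifting) ext)
qed

lemma Pr_finite3:
  fixes X U V :: "'u \<Rightarrow> bool"
  shows "Pr M P = (\<Sum>a\<in>UNIV. \<Sum>b\<in>UNIV. \<Sum>d\<in>UNIV. Pr M (\<lambda>\<omega>. P \<omega> \<and> X \<omega> = a \<and> U \<omega> = b \<and> V \<omega> = d))"
proof -
  have h: "((\<lambda>t. Pr M (\<lambda>\<omega>. P \<omega> \<and> (X \<omega>, U \<omega>, V \<omega>) = t)) has_sum Pr M P) UNIV"
    by (rule Pr_infsum)
  have h2: "((\<lambda>t. Pr M (\<lambda>\<omega>. P \<omega> \<and> (X \<omega>, U \<omega>, V \<omega>) = t)) has_sum 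
     (\<Sum>t\<in>UNIV. Pr M (\<lambda>\<omega>. P \<omega> \<and> (X \<omega>, U \<omega>, V \<omega>) = t))) UNIV"
    by (rule has_sum_finite) simp
  have "Pr M P = (\<Sum>t\<in>UNIV. Pr M (\<lambda>\<omega>. P \<omega> \<and> (X \<omega>, U \<omega>, V \<omega>) = t))"
    using h h2 has_sum_unique by blast
  also have "\<dots> = (\<Sum>a\<in>UNIV. \<Sum>b\<in>UNIV. \<Sum>d\<in>UNIV. Pr M (\<lambda>\<omega>. P \<omega> \<and> X \<omega> = a \<and> U \<omega> = b \<and> V \<omega> = d))"
    by (simp add: sum.cartesian_product case_prod_beta prod_eq_iff)
  finally show ?thesis .
qed

lemma Pr_atoms:
  fixes X U V :: "'u \<Rightarrow> bool"
  assumes "\<And>\<omega>. R \<omega> \<Longrightarrow> Q \<omega> = q (X \<omega>) (U \<omega>) (V \<omega>)"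
  shows "Pr M (\<lambda>\<omega>. Q \<omega> \<and> R \<omega>) = (\<Sum>a\<in>UNIV. \<Sum>b\<in>UNIV. \<Sum>d\<in>UNIV.
     if q a b d then Pr M (\<lambda>\<omega>. R \<omega> \<and> X \<omega> = a \<and> U \<omega> = b \<and> V \<omega> = d) else 0)"
proof -
  have e: "Pr M (\<lambda>\<omega>. (Q \<omega> \<and> R \<omega>) \<and> X \<omega> = a \<and> U \<omega> = b \<and> V \<omega> = d)
     = (if q a b d then Pr M (\<lambda>\<omega>. R \<omega> \<and> X \<omega> = a \<and> U \<omega> = b \<and> V \<omega> = d) else 0)" for a b d
  proof (cases "q a b d")
    case True thus ?thesis by (auto intro!: Pr_cong simp: assms)
  next
    case False
    hence "Pr M (\<lambda>\<omega>. (Q \<omega> \<and> R \<omega>) \<and> X \<omega> = a \<and> U \<omega> = b \<and> V \<omega> = d) = Pr M (\<lambda>_. False)"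
      by (auto intro!: Pr_cong simp: assms)
    thus ?thesis using False by (simp add: Pr_def)
  qed
  show ?thesis by (subst Pr_finite3[where X=X and U=U and V=V]) (simp only: e)
qed


lemma key:
  fixes M :: "'u pmf" and X :: "'u \<Rightarrow> bool" and Y :: "'u \<Rightarrow> bool"
    and Z :: "'u \<Rightarrow> 'z" and C :: "'u \<Rightarrow> 'c"
    and Yx :: "bool \<Rightarrow> 'u \<Rightarrow> bool" and Zx :: "bool \<Rightarrow> 'u \<Rightarrow> 'z"
  assumes cons: "\<And>\<omega> a. X \<omega> = a \<Longrightarrow> Yx a \<omega> = Y \<omega> \<and> Zx a \<omega> = Z \<omega>"
    and ind: "cond_indep M (Yx a) (\<lambda>\<omega>. (X \<omega>, Zx b \<omega>)) (\<lambda>\<omega>. (Zx a \<omega>, C \<omega>))"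
    and pos: "Pr M (\<lambda>\<omega>. Zx a \<omega> = z \<and> C \<omega> = c) > 0"
    and pos2: "Pr M (\<lambda>\<omega>. Z \<omega> = z \<and> X \<omega> = a \<and> C \<omega> = c) > 0"
  shows "Pr M (\<lambda>\<omega>. Yx a \<omega> = v \<and> Zx a \<omega> = z \<and> Zx b \<omega> = z' \<and> C \<omega> = c)
     = cPr M (\<lambda>\<omega>. Y \<omega> = v) (\<lambda>\<omega>. Z \<omega> = z \<and> X \<omega> = a \<and> C \<omega> = c)
       * Pr M (\<lambda>\<omega>. Zx a \<omega> = z \<and> Zx b \<omega> = z' \<and> C \<omega> = c)"
proof -
  define D where "D = Pr M (\<lambda>\<omega>. Zx a \<omega> = z \<and> C \<omega> = c)"
  define K where "K = Pr M (\<lambda>\<omega>. Yx a \<omega> = v \<and> Zx a \<omega> = z \<and> C \<omega> = c)"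
  have I: "Pr M (\<lambda>\<omega>. Yx a \<omega> = v \<and> (X \<omega>, Zx b \<omega>) = (bx, z'') \<and> (Zx a \<omega>, C \<omega>) = (z, c))
      * Pr M (\<lambda>\<omega>. (Zx a \<omega>, C \<omega>) = (z, c))
    = Pr M (\<lambda>\<omega>. Yx a \<omega> = v \<and> (Zx a \<omega>, C \<omega>) = (z, c))
      * Pr M (\<lambda>\<omega>. (X \<omega>, Zx b \<omega>) = (bx, z'') \<and> (Zx a \<omega>, C \<omega>) = (z, c))" for bx z''
    using ind unfolding cond_indep_def by blast
  have I2: "Pr M (\<lambda>\<omega>. Yx a \<omega> = v \<and> X \<omega> = bx \<and> Zx b \<omega> = z'' \<and> Zx a \<omega> = z \<and> C \<omega> = c) * D
     = K * Pr M (\<lambda>\<omega>. X \<omega> = bx \<and> Zx b \<omega> = z'' \<and> Zx a \<omega> = z \<and> C \<omega> = c)" for bx z''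
    using I[of bx z''] unfolding D_def K_def by simp
  have m1: "Pr M (\<lambda>\<omega>. Yx a \<omega> = v \<and> X \<omega> = a \<and> Zx a \<omega> = z \<and> C \<omega> = c) * D
      = K * Pr M (\<lambda>\<omega>. X \<omega> = a \<and> Zx a \<omega> = z \<and> C \<omega> = c)"
  proof (rule Pr_marg[where f="Zx b"])
    fix z''
    show "Pr M (\<lambda>\<omega>. (Yx a \<omega> = v \<and> X \<omega> = a \<and> Zx a \<omega> = z \<and> C \<omega> = c) \<and> Zx b \<omega> = z'') * D =
          K * Pr M (\<lambda>\<omega>. (X \<omega> = a \<and> Zx a \<omega> = z \<and> C \<omega> = c) \<and> Zx b \<omega> = z'')"
      using I2[of a z''] by (smt (verit, best) Pr_cong)
  qed
  have m2: "Pr M (\<lambda>\<omega>. Yx a \<omega> = v \<and> Zx a \<omega> = z \<and> Zx b \<omega> = z' \<and> C \<omega> = c) * D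
      = K * Pr M (\<lambda>\<omega>. Zx a \<omega> = z \<and> Zx b \<omega> = z' \<and> C \<omega> = c)"
  proof (rule Pr_marg[where f="X"])
    fix bx
    show "Pr M (\<lambda>\<omega>. (Yx a \<omega> = v \<and> Zx a \<omega> = z \<and> Zx b \<omega> = z' \<and> C \<omega> = c) \<and> X \<omega> = bx) * D =
          K * Pr M (\<lambda>\<omega>. (Zx a \<omega> = z \<and> Zx b \<omega> = z' \<and> C \<omega> = c) \<and> X \<omega> = bx)"
      using I2[of bx z'] by (smt (verit, best) Pr_cong)
  qed
  have e1: "Pr M (\<lambda>\<omega>. Yx a \<omega> = v \<and> X \<omega> = a \<and> Zx a \<omega> = z \<and> C \<omega> = c)
      = Pr M (\<lambda>\<omega>. Y \<omega> = v \<and> Z \<omega> = z \<and> X \<omega> = a \<and> C \<omega> = c)"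
    by (rule Pr_cong) (metis cons)
  have e2: "Pr M (\<lambda>\<omega>. X \<omega> = a \<and> Zx a \<omega> = z \<and> C \<omega> = c)
      = Pr M (\<lambda>\<omega>. Z \<omega> = z \<and> X \<omega> = a \<and> C \<omega> = c)"
    by (rule Pr_cong) (metis cons)
  have Dpos: "D > 0" using pos D_def by simp
  have r: "cPr M (\<lambda>\<omega>. Y \<omega> = v) (\<lambda>\<omega>. Z \<omega> = z \<and> X \<omega> = a \<and> C \<omega> = c) = K / D"
    using m1 e1 e2 pos2 Dpos unfolding cPr_def by (simp add: field_simps)
  have "Pr M (\<lambda>\<omega>. Yx a \<omega> = v \<and> Zx a \<omega> = z \<and> Zx b \<omega> = z' \<and> C \<omega> = c)
     = K * Pr M (\<lambda>\<omega>. Zx a \<omega> = z \<and> Zx b \<omega> = z' \<and> C \<omega> = c) / D"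
    using m2 Dpos by (simp add: field_simps)
  thus ?thesis using r by simp
qed

theorem lemma5:
  fixes M :: "'u pmf"
    and X :: "'u \<Rightarrow> bool" and Y :: "'u \<Rightarrow> bool"
    and Z :: "'u \<Rightarrow> 'z" and C :: "'u \<Rightarrow> 'c"
    and Yx :: "bool \<Rightarrow> 'u \<Rightarrow> bool" and Zx :: "bool \<Rightarrow> 'u \<Rightarrow> 'z"
    and x x' y y' :: bool and c :: 'c
  assumes consistency: "\<And>\<omega> a. X \<omega> = a \<Longrightarrow> Yx a \<omega> = Y \<omega> \<and> Zx a \<omega> = Z \<omega>"
    and indep: "\<And>a b. a \<noteq> b \<Longrightarrow>
                  cond_indep M (Yx a) (\<lambda>\<omega>. (X \<omega>, Zx b \<omega>)) (\<lambda>\<omega>. (Zx a \<omega>, C \<omega>))"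
    and xx': "x \<noteq> x'" and yy': "y \<noteq> y'"
    and Pc: "Pr M (\<lambda>\<omega>. C \<omega> = c) > 0"
    and defined_x: "\<And>z. Pr M (\<lambda>\<omega>. Zx x \<omega> = z \<and> C \<omega> = c) > 0 \<Longrightarrow>
                          Pr M (\<lambda>\<omega>. Z \<omega> = z \<and> X \<omega> = x \<and> C \<omega> = c) > 0"
    and defined_x': "\<And>z'. Pr M (\<lambda>\<omega>. Zx x' \<omega> = z' \<and> C \<omega> = c) > 0 \<Longrightarrow>
                          Pr M (\<lambda>\<omega>. Z \<omega> = z' \<and> X \<omega> = x' \<and> C \<omega> = c) > 0"
  shows
   "max 0 (max (cPr M (\<lambda>\<omega>. Yx x \<omega> = y) (\<lambda>\<omega>. C \<omega> = c) - cPr M (\<lambda>\<omega>. Yx x' \<omega> = y) (\<lambda>\<omega>. C \<omega> = c))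
          (max (cPr M (\<lambda>\<omega>. Y \<omega> = y) (\<lambda>\<omega>. C \<omega> = c) - cPr M (\<lambda>\<omega>. Yx x' \<omega> = y) (\<lambda>\<omega>. C \<omega> = c))
               (cPr M (\<lambda>\<omega>. Yx x \<omega> = y) (\<lambda>\<omega>. C \<omega> = c) - cPr M (\<lambda>\<omega>. Y \<omega> = y) (\<lambda>\<omega>. C \<omega> = c))))
      \<le> cPr M (\<lambda>\<omega>. Yx x \<omega> = y \<and> Yx x' \<omega> = y') (\<lambda>\<omega>. C \<omega> = c)
    \<and> cPr M (\<lambda>\<omega>. Yx x \<omega> = y \<and> Yx x' \<omega> = y') (\<lambda>\<omega>. C \<omega> = c)
      \<le> min (cPr M (\<lambda>\<omega>. Yx x \<omega> = y) (\<lambda>\<omega>. C \<omega> = c))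
          (min (cPr M (\<lambda>\<omega>. Yx x' \<omega> = y') (\<lambda>\<omega>. C \<omega> = c))
            (min (cPr M (\<lambda>\<omega>. Y \<omega> = y \<and> X \<omega> = x) (\<lambda>\<omega>. C \<omega> = c)
                  + cPr M (\<lambda>\<omega>. Y \<omega> = y' \<and> X \<omega> = x') (\<lambda>\<omega>. C \<omega> = c))
                 (cPr M (\<lambda>\<omega>. Yx x \<omega> = y) (\<lambda>\<omega>. C \<omega> = c) - cPr M (\<lambda>\<omega>. Yx x' \<omega> = y) (\<lambda>\<omega>. C \<omega> = c)
                  + cPr M (\<lambda>\<omega>. Y \<omega> = y \<and> X \<omega> = x') (\<lambda>\<omega>. C \<omega> = c)
                  + cPr M (\<lambda>\<omega>. Y \<omega> = y' \<and> X \<omega> = x) (\<lambda>\<omega>. C \<omega> = c))))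
    \<and> ennreal (cPr M (\<lambda>\<omega>. Yx x \<omega> = y \<and> Yx x' \<omega> = y') (\<lambda>\<omega>. C \<omega> = c))
      \<le> (\<Sum>\<^sub>\<infinity>(z, z') \<in> UNIV.
            ennreal (min (cPr M (\<lambda>\<omega>. Y \<omega> = y) (\<lambda>\<omega>. Z \<omega> = z \<and> X \<omega> = x \<and> C \<omega> = c))
                         (cPr M (\<lambda>\<omega>. Y \<omega> = y') (\<lambda>\<omega>. Z \<omega> = z' \<and> X \<omega> = x' \<and> C \<omega> = c))
                   * min (cPr M (\<lambda>\<omega>. Zx x \<omega> = z) (\<lambda>\<omega>. C \<omega> = c))
                         (cPr M (\<lambda>\<omega>. Zx x' \<omega> = z') (\<lambda>\<omega>. C \<omega> = c))))"
  
proof -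
  define pc where "pc = Pr M (\<lambda>\<omega>. C \<omega> = c)"
  have pcpos: "pc > 0" using Pc pc_def by simp
  have x'eq: "x' = (\<not> x)" using xx' by auto
  have y'eq: "y' = (\<not> y)" using yy' by auto
  have Yform: "\<And>\<omega>. Y \<omega> = (if X \<omega> = x then Yx x \<omega> else Yx x' \<omega>)"
  proof -
    fix \<omega>
    show "Y \<omega> = (if X \<omega> = x then Yx x \<omega> else Yx x' \<omega>)"
    proof (cases "X \<omega> = x")
      case True thus ?thesis using consistency[of \<omega> x] by simp
    next
      case False hence "X \<omega> = x'" using x'eq by auto
      thus ?thesis using consistency[of \<omega> x'] False by simp
    qed
  qed
  define A where "A a b d = Pr M (\<lambda>\<omega>. C \<omega> = c \<and> X \<omega> = a \<and> Yx x \<omega> = b \<and> Yx x' \<omega> = d)" for a b d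
  have nn: "\<And>a b d. 0 \<le> A a b d" unfolding A_def by (rule Pr_nonneg)
  note nns = nn[of True True True] nn[of True True False] nn[of True False True] nn[of True False False]
    nn[of False True True] nn[of False True False] nn[of False False True] nn[of False False False]
  have T1: "Pr M (\<lambda>\<omega>. Yx x \<omega> = y \<and> C \<omega> = c) = (\<Sum>a\<in>UNIV. \<Sum>b\<in>UNIV. \<Sum>d\<in>UNIV. if b = y then A a b d else 0)"
    unfolding A_def by (rule Pr_atoms[where q="\<lambda>a b d. b = y"]) auto
  have T2: "Pr M (\<lambda>\<omega>. Yx x' \<omega> = y \<and> C \<omega> = c) = (\<Sum>a\<in>UNIV. \<Sum>b\<in>UNIV. \<Sum>d\<in>UNIV. if d = y then A a b d else 0)"
    unfolding A_def by (rule Pr_atoms[where q="\<lambda>a b d. d = y"]) auto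
  have T3: "Pr M (\<lambda>\<omega>. Y \<omega> = y \<and> C \<omega> = c) = (\<Sum>a\<in>UNIV. \<Sum>b\<in>UNIV. \<Sum>d\<in>UNIV. if (if a = x then b else d) = y then A a b d else 0)"
    unfolding A_def by (rule Pr_atoms[where q="\<lambda>a b d. (if a = x then b else d) = y"]) (auto simp: Yform)
  have T4: "Pr M (\<lambda>\<omega>. (Yx x \<omega> = y \<and> Yx x' \<omega> = y') \<and> C \<omega> = c) = (\<Sum>a\<in>UNIV. \<Sum>b\<in>UNIV. \<Sum>d\<in>UNIV. if b = y \<and> d = y' then A a b d else 0)"
    unfolding A_def by (rule Pr_atoms[where q="\<lambda>a b d. b = y \<and> d = y'"]) auto
  have T5: "Pr M (\<lambda>\<omega>. Yx x' \<omega> = y' \<and> C \<omega> = c) = (\<Sum>a\<in>UNIV. \<Sum>b\<in>UNIV. \<Sum>d\<in>UNIV. if d = y' then A a b d else 0)"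
    unfolding A_def by (rule Pr_atoms[where q="\<lambda>a b d. d = y'"]) auto
  have T6: "\<And>yv xv. Pr M (\<lambda>\<omega>. (Y \<omega> = yv \<and> X \<omega> = xv) \<and> C \<omega> = c) = (\<Sum>a\<in>UNIV. \<Sum>b\<in>UNIV. \<Sum>d\<in>UNIV. if (if a = x then b else d) = yv \<and> a = xv then A a b d else 0)"
    unfolding A_def by (rule Pr_atoms[where q="\<lambda>a b d. (if a = x then b else d) = yv \<and> a = xv" for yv xv]) (auto simp: Yform)
  have P1: "max 0 (max (cPr M (\<lambda>\<omega>. Yx x \<omega> = y) (\<lambda>\<omega>. C \<omega> = c) - cPr M (\<lambda>\<omega>. Yx x' \<omega> = y) (\<lambda>\<omega>. C \<omega> = c))
          (max (cPr M (\<lambda>\<omega>. Y \<omega> = y) (\<lambda>\<omega>. C \<omega> = c) - cPr M (\<lambda>\<omega>. Yx x' \<omega> = y) (\<lambda>\<omega>. C \<omega> = c))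
               (cPr M (\<lambda>\<omega>. Yx x \<omega> = y) (\<lambda>\<omega>. C \<omega> = c) - cPr M (\<lambda>\<omega>. Y \<omega> = y) (\<lambda>\<omega>. C \<omega> = c))))
      \<le> cPr M (\<lambda>\<omega>. Yx x \<omega> = y \<and> Yx x' \<omega> = y') (\<lambda>\<omega>. C \<omega> = c)"
  proof -
    have a1: "0 \<le> Pr M (\<lambda>\<omega>. (Yx x \<omega> = y \<and> Yx x' \<omega> = y') \<and> C \<omega> = c)" by (rule Pr_nonneg)
    have a2: "Pr M (\<lambda>\<omega>. Yx x \<omega> = y \<and> C \<omega> = c) - Pr M (\<lambda>\<omega>. Yx x' \<omega> = y \<and> C \<omega> = c)
       \<le> Pr M (\<lambda>\<omega>. (Yx x \<omega> = y \<and> Yx x' \<omega> = y') \<and> C \<omega> = c)"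
      unfolding T1 T2 T4 using nns by (cases x; cases y) (simp_all add: UNIV_bool x'eq y'eq)
    have a3: "Pr M (\<lambda>\<omega>. Y \<omega> = y \<and> C \<omega> = c) - Pr M (\<lambda>\<omega>. Yx x' \<omega> = y \<and> C \<omega> = c)
       \<le> Pr M (\<lambda>\<omega>. (Yx x \<omega> = y \<and> Yx x' \<omega> = y') \<and> C \<omega> = c)"
      unfolding T3 T2 T4 using nns by (cases x; cases y) (simp_all add: UNIV_bool x'eq y'eq)
    have a4: "Pr M (\<lambda>\<omega>. Yx x \<omega> = y \<and> C \<omega> = c) - Pr M (\<lambda>\<omega>. Y \<omega> = y \<and> C \<omega> = c)
       \<le> Pr M (\<lambda>\<omega>. (Yx x \<omega> = y \<and> Yx x' \<omega> = y') \<and> C \<omega> = c)"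
      unfolding T3 T1 T4 using nns by (cases x; cases y) (simp_all add: UNIV_bool x'eq y'eq)
    show ?thesis unfolding cPr_def pc_def[symmetric] using a1 a2 a3 a4 pcpos
      by (simp add: diff_divide_distrib[symmetric] divide_right_mono)
  qed
  have P2: "cPr M (\<lambda>\<omega>. Yx x \<omega> = y \<and> Yx x' \<omega> = y') (\<lambda>\<omega>. C \<omega> = c)
      \<le> min (cPr M (\<lambda>\<omega>. Yx x \<omega> = y) (\<lambda>\<omega>. C \<omega> = c))
          (min (cPr M (\<lambda>\<omega>. Yx x' \<omega> = y') (\<lambda>\<omega>. C \<omega> = c))
            (min (cPr M (\<lambda>\<omega>. Y \<omega> = y \<and> X \<omega> = x) (\<lambda>\<omega>. C \<omega> = c)
                  + cPr M (\<lambda>\<omega>. Y \<omega> = y' \<and> X \<omega> = x') (\<lambda>\<omega>. C \<omega> = c))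
                 (cPr M (\<lambda>\<omega>. Yx x \<omega> = y) (\<lambda>\<omega>. C \<omega> = c) - cPr M (\<lambda>\<omega>. Yx x' \<omega> = y) (\<lambda>\<omega>. C \<omega> = c)
                  + cPr M (\<lambda>\<omega>. Y \<omega> = y \<and> X \<omega> = x') (\<lambda>\<omega>. C \<omega> = c)
                  + cPr M (\<lambda>\<omega>. Y \<omega> = y' \<and> X \<omega> = x) (\<lambda>\<omega>. C \<omega> = c))))"
  proof -
    have b1: "Pr M (\<lambda>\<omega>. (Yx x \<omega> = y \<and> Yx x' \<omega> = y') \<and> C \<omega> = c) \<le> Pr M (\<lambda>\<omega>. Yx x \<omega> = y \<and> C \<omega> = c)"
      unfolding T1 T4 using nns by (cases x; cases y) (simp_all add: UNIV_bool x'eq y'eq)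
    have b2: "Pr M (\<lambda>\<omega>. (Yx x \<omega> = y \<and> Yx x' \<omega> = y') \<and> C \<omega> = c) \<le> Pr M (\<lambda>\<omega>. Yx x' \<omega> = y' \<and> C \<omega> = c)"
      unfolding T5 T4 using nns by (cases x; cases y) (simp_all add: UNIV_bool x'eq y'eq)
    have b3: "Pr M (\<lambda>\<omega>. (Yx x \<omega> = y \<and> Yx x' \<omega> = y') \<and> C \<omega> = c) \<le> 
       Pr M (\<lambda>\<omega>. (Y \<omega> = y \<and> X \<omega> = x) \<and> C \<omega> = c) + Pr M (\<lambda>\<omega>. (Y \<omega> = y' \<and> X \<omega> = x') \<and> C \<omega> = c)"
      unfolding T6 T4 using nns by (cases x; cases y) (simp_all add: UNIV_bool x'eq y'eq)
    have b4: "Pr M (\<lambda>\<omega>. (Yx x \<omega> = y \<and> Yx x' \<omega> = y') \<and> C \<omega> = c) \<le> 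
       Pr M (\<lambda>\<omega>. Yx x \<omega> = y \<and> C \<omega> = c) - Pr M (\<lambda>\<omega>. Yx x' \<omega> = y \<and> C \<omega> = c) +
       Pr M (\<lambda>\<omega>. (Y \<omega> = y \<and> X \<omega> = x') \<and> C \<omega> = c) + Pr M (\<lambda>\<omega>. (Y \<omega> = y' \<and> X \<omega> = x) \<and> C \<omega> = c)"
      unfolding T6 T4 T1 T2 using nns by (cases x; cases y) (simp_all add: UNIV_bool x'eq y'eq)
    show ?thesis unfolding cPr_def pc_def[symmetric] using b1 b2 b3 b4 pcpos
      by (simp add: diff_divide_distrib[symmetric] add_divide_distrib[symmetric] divide_right_mono)
  qed
  show ?thesis
  proof (intro conjI)
    show "max 0 (max (cPr M (\<lambda>\<omega>. Yx x \<omega> = y) (\<lambda>\<omega>. C \<omega> = c) - cPr M (\<lambda>\<omega>. Yx x' \<omega> = y) (\<lambda>\<omega>. C \<omega> = c))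
          (max (cPr M (\<lambda>\<omega>. Y \<omega> = y) (\<lambda>\<omega>. C \<omega> = c) - cPr M (\<lambda>\<omega>. Yx x' \<omega> = y) (\<lambda>\<omega>. C \<omega> = c))
               (cPr M (\<lambda>\<omega>. Yx x \<omega> = y) (\<lambda>\<omega>. C \<omega> = c) - cPr M (\<lambda>\<omega>. Y \<omega> = y) (\<lambda>\<omega>. C \<omega> = c))))
      \<le> cPr M (\<lambda>\<omega>. Yx x \<omega> = y \<and> Yx x' \<omega> = y') (\<lambda>\<omega>. C \<omega> = c)" by (rule P1)
  next
    show "cPr M (\<lambda>\<omega>. Yx x \<omega> = y \<and> Yx x' \<omega> = y') (\<lambda>\<omega>. C \<omega> = c)
      \<le> min (cPr M (\<lambda>\<omega>. Yx x \<omega> = y) (\<lambda>\<omega>. C \<omega> = c))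
          (min (cPr M (\<lambda>\<omega>. Yx x' \<omega> = y') (\<lambda>\<omega>. C \<omega> = c))
            (min (cPr M (\<lambda>\<omega>. Y \<omega> = y \<and> X \<omega> = x) (\<lambda>\<omega>. C \<omega> = c)
                  + cPr M (\<lambda>\<omega>. Y \<omega> = y' \<and> X \<omega> = x') (\<lambda>\<omega>. C \<omega> = c))
                 (cPr M (\<lambda>\<omega>. Yx x \<omega> = y) (\<lambda>\<omega>. C \<omega> = c) - cPr M (\<lambda>\<omega>. Yx x' \<omega> = y) (\<lambda>\<omega>. C \<omega> = c)
                  + cPr M (\<lambda>\<omega>. Y \<omega> = y \<and> X \<omega> = x') (\<lambda>\<omega>. C \<omega> = c)
                  + cPr M (\<lambda>\<omega>. Y \<omega> = y' \<and> X \<omega> = x) (\<lambda>\<omega>. C \<omega> = c))))" by (rule P2)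
  next
    show "ennreal (cPr M (\<lambda>\<omega>. Yx x \<omega> = y \<and> Yx x' \<omega> = y') (\<lambda>\<omega>. C \<omega> = c))
      \<le> (\<Sum>\<^sub>\<infinity>(z, z') \<in> UNIV.
            ennreal (min (cPr M (\<lambda>\<omega>. Y \<omega> = y) (\<lambda>\<omega>. Z \<omega> = z \<and> X \<omega> = x \<and> C \<omega> = c))
                         (cPr M (\<lambda>\<omega>. Y \<omega> = y') (\<lambda>\<omega>. Z \<omega> = z' \<and> X \<omega> = x' \<and> C \<omega> = c))
                   * min (cPr M (\<lambda>\<omega>. Zx x \<omega> = z) (\<lambda>\<omega>. C \<omega> = c))
                         (cPr M (\<lambda>\<omega>. Zx x' \<omega> = z') (\<lambda>\<omega>. C \<omega> = c))))"
  proof -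
    define g where "g b = Pr M (\<lambda>\<omega>. ((Yx x \<omega> = y \<and> Yx x' \<omega> = y') \<and> C \<omega> = c) \<and> (Zx x \<omega>, Zx x' \<omega>) = b)" for b
    define T where "T = Pr M (\<lambda>\<omega>. (Yx x \<omega> = y \<and> Yx x' \<omega> = y') \<and> C \<omega> = c)"
    define RHS where "RHS = (\<lambda>(z, z'). ennreal (min (cPr M (\<lambda>\<omega>. Y \<omega> = y) (\<lambda>\<omega>. Z \<omega> = z \<and> X \<omega> = x \<and> C \<omega> = c))
                         (cPr M (\<lambda>\<omega>. Y \<omega> = y') (\<lambda>\<omega>. Z \<omega> = z' \<and> X \<omega> = x' \<and> C \<omega> = c))
                   * min (cPr M (\<lambda>\<omega>. Zx x \<omega> = z) (\<lambda>\<omega>. C \<omega> = c))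
                         (cPr M (\<lambda>\<omega>. Zx x' \<omega> = z') (\<lambda>\<omega>. C \<omega> = c))))"
    have hs: "(g has_sum T) UNIV" unfolding g_def T_def by (rule Pr_infsum)
    have hs2: "((\<lambda>b. g b * inverse pc) has_sum (T * inverse pc)) UNIV"
      by (rule has_sum_cmult_left) (rule hs)
    have gnn: "\<And>b. 0 \<le> g b" unfolding g_def by (rule Pr_nonneg)
    have pt: "g (z, z') * inverse pc \<le> min (cPr M (\<lambda>\<omega>. Y \<omega> = y) (\<lambda>\<omega>. Z \<omega> = z \<and> X \<omega> = x \<and> C \<omega> = c))
                         (cPr M (\<lambda>\<omega>. Y \<omega> = y') (\<lambda>\<omega>. Z \<omega> = z' \<and> X \<omega> = x' \<and> C \<omega> = c))
                   * min (cPr M (\<lambda>\<omega>. Zx x \<omega> = z) (\<lambda>\<omega>. C \<omega> = c))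
                         (cPr M (\<lambda>\<omega>. Zx x' \<omega> = z') (\<lambda>\<omega>. C \<omega> = c))" for z z'
    proof -
      define r1 where "r1 = cPr M (\<lambda>\<omega>. Y \<omega> = y) (\<lambda>\<omega>. Z \<omega> = z \<and> X \<omega> = x \<and> C \<omega> = c)"
      define r2 where "r2 = cPr M (\<lambda>\<omega>. Y \<omega> = y') (\<lambda>\<omega>. Z \<omega> = z' \<and> X \<omega> = x' \<and> C \<omega> = c)"
      define Pz where "Pz = Pr M (\<lambda>\<omega>. Zx x \<omega> = z \<and> C \<omega> = c)"
      define Pz' where "Pz' = Pr M (\<lambda>\<omega>. Zx x' \<omega> = z' \<and> C \<omega> = c)"
      define J where "J = Pr M (\<lambda>\<omega>. Zx x \<omega> = z \<and> Zx x' \<omega> = z' \<and> C \<omega> = c)"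
      have r1nn: "0 \<le> r1" unfolding r1_def by (rule cPr_nonneg)
      have r2nn: "0 \<le> r2" unfolding r2_def by (rule cPr_nonneg)
      have gJ: "g (z, z') \<le> J" unfolding g_def J_def by (rule Pr_mono) auto
      have JPz: "J \<le> Pz" unfolding Pz_def J_def by (rule Pr_mono) auto
      have JPz': "J \<le> Pz'" unfolding Pz'_def J_def by (rule Pr_mono) auto
      have Jnn: "0 \<le> J" unfolding J_def by (rule Pr_nonneg)
      have "g (z, z') \<le> min r1 r2 * min Pz Pz'"
      proof (cases "Pz > 0 \<and> Pz' > 0")
        case True
        have k1: "Pr M (\<lambda>\<omega>. Yx x \<omega> = y \<and> Zx x \<omega> = z \<and> Zx x' \<omega> = z' \<and> C \<omega> = c) = r1 * J"
          unfolding r1_def J_def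
          by (rule key[OF consistency indep[OF xx']]) (use True Pz_def defined_x in auto)
        have k2: "Pr M (\<lambda>\<omega>. Yx x' \<omega> = y' \<and> Zx x' \<omega> = z' \<and> Zx x \<omega> = z \<and> C \<omega> = c)
             = r2 * Pr M (\<lambda>\<omega>. Zx x' \<omega> = z' \<and> Zx x \<omega> = z \<and> C \<omega> = c)"
          unfolding r2_def
          by (rule key[OF consistency indep]) (use True Pz'_def defined_x' xx' in auto)
        have JJ: "Pr M (\<lambda>\<omega>. Zx x' \<omega> = z' \<and> Zx x \<omega> = z \<and> C \<omega> = c) = J"
          unfolding J_def by (rule Pr_cong) auto
        have g1: "g (z, z') \<le> r1 * J" unfolding k1[symmetric] g_def by (rule Pr_mono) auto
        have g2: "g (z, z') \<le> r2 * J" unfolding k2[symmetric] JJ[symmetric] g_def by (rule Pr_mono) auto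
        have "g (z, z') \<le> min r1 r2 * J" using g1 g2 by (simp add: min_mult_distrib_right Jnn)
        also have "\<dots> \<le> min r1 r2 * min Pz Pz'"
          using JPz JPz' r1nn r2nn by (intro mult_left_mono) auto
        finally show ?thesis .
      next
        case False
        have Pnn: "0 \<le> Pz" "0 \<le> Pz'" unfolding Pz_def Pz'_def by (rule Pr_nonneg)+
        have "g (z, z') = 0" using False Pnn gJ JPz JPz' gnn[of "(z,z')"] by auto
        thus ?thesis using r1nn r2nn Pnn by simp
      qed
      hence "g (z, z') * inverse pc \<le> min r1 r2 * min Pz Pz' * inverse pc"
        using pcpos by (intro mult_right_mono) auto
      also have "\<dots> = min r1 r2 * min (Pz / pc) (Pz' / pc)"
        proof -
        have "min Pz Pz' * inverse pc = min (Pz / pc) (Pz' / pc)"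
          using pcpos min_mult_distrib_right[of Pz Pz' "inverse pc"] by (simp add: divide_inverse)
        thus ?thesis by (simp add: mult.assoc)
      qed
      finally show ?thesis unfolding r1_def r2_def Pz_def Pz'_def cPr_def pc_def .
    qed
    have summ: "(\<lambda>b. g b * inverse pc) summable_on UNIV" using hs2 has_sum_imp_summable by blast
    have "ennreal (cPr M (\<lambda>\<omega>. Yx x \<omega> = y \<and> Yx x' \<omega> = y') (\<lambda>\<omega>. C \<omega> = c)) = ennreal (T * inverse pc)"
      unfolding cPr_def T_def pc_def by (simp add: divide_inverse)
    also have "\<dots> = ennreal (infsum (\<lambda>b. g b * inverse pc) UNIV)"
      using hs2 infsumI by metis
    also have "\<dots> = infsum (ennreal \<circ> (\<lambda>b. g b * inverse pc)) UNIV"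
    proof (rule infsum_comm_additive_general[symmetric])
      show "\<And>F. finite F \<Longrightarrow> F \<subseteq> UNIV \<Longrightarrow> sum (ennreal \<circ> (\<lambda>b. g b * inverse pc)) F = ennreal (sum (\<lambda>b. g b * inverse pc) F)"
        using gnn pcpos by (simp add: sum_ennreal o_def)
      show "isCont ennreal (infsum (\<lambda>b. g b * inverse pc) UNIV)"
        by (simp add: continuous_at_imp_continuous_at_within continuous_on_eq_continuous_at continuous_on_ennreal continuous_on_id)
      show "(\<lambda>b. g b * inverse pc) summable_on UNIV" by (rule summ)
    qed
    also have "\<dots> \<le> infsum RHS UNIV"
    proof (rule infsum_mono)
      fix b :: "'z \<times> 'z"
      obtain z z' where b: "b = (z, z')" by fastforce
      show "(ennreal \<circ> (\<lambda>b. g b * inverse pc)) b \<le> RHS b"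
        unfolding b RHS_def using pt[of z z'] by (simp add: ennreal_leI)
    qed (simp_all add: nonneg_summable_on_complete)
    finally show ?thesis unfolding RHS_def .
  qed
  qed
qed

end
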